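(* For every positive integer $r$, $\displaystyle \bar T(\{1\}_r)=\frac{(-1)^r}{r!}\left(\frac{\pi}{2}\right)^r.$
   Context: $\{1\}_r$ denotes the sequence of $r$ ones. $\bar T(\{1\}_r):=2^r\sum_{0<n_1<\cdots<n_r}\frac{(-1)^{n_r}}{(2n_1-1)(2n_2-2)\cdots(2n_r-r)}$ (conditionally convergent). *)

theory Defs
  imports Complex_Main
begin

text \<open>Index tuples (n_1,...,n_r) with 0 < n_1 < ... < n_r = m, represented as lists
  (list position j corresponds to index j+1).\<close>
definition Tbar_tuples :: "nat \<Rightarrow> nat \<Rightarrow> nat list set" where
  "Tbar_tuples r m = {ns. length ns = r \<and> sorted_wrt (<) ns \<and> (\<forall>x\<in>set ns. 0 < x) \<and> last ns = m}"

definition Tbar_term :: "nat \<Rightarrow> nat \<Rightarrow> real" where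
  "Tbar_term r m = 2 ^ r * (\<Sum>ns\<in>Tbar_tuples r m.
      (-1) ^ m / (\<Prod>j<r. 2 * real (ns ! j) - real (j + 1)))"

end

theory Submission
  imports Defs
begin

fun b :: "nat \<Rightarrow> nat \<Rightarrow> real" where
  "b 0 m = (if m = 0 then 1 else 0)"
| "b (Suc r) m = (\<Sum>n<m. b r n) / (2 * real m - real (Suc r))"

lemma b_zero: "m < r \<Longrightarrow> b r m = 0"
proof (induction r arbitrary: m)
  case 0 then show ?case by simp
next
  case (Suc r) then show ?case by (auto intro!: sum.neutral)
qed

lemma b_nonneg: "b r m \<ge> 0"
proof (induction r arbitrary: m)
  case 0 then show ?case by simp
next
  case (Suc r)
  show ?case
  proof (cases "m < Suc r")
    case True then show ?thesis by (simp only: b_zero[OF True])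
  next
    case False
    then have "2 * real m - real (Suc r) > 0" by simp
    moreover have "(\<Sum>n<m. b r n) \<ge> 0" using Suc by (intro sum_nonneg) auto
    ultimately show ?thesis by simp
  qed
qed

lemma sorted_le_last: "sorted_wrt (<) (ns::nat list) \<Longrightarrow> x \<in> set ns \<Longrightarrow> x \<le> last ns"
proof (induction ns rule: rev_induct)
  case Nil then show ?case by simp
next
  case (snoc a xs)
  have "\<forall>y\<in>set xs. y < a" using snoc.prems(1) by (simp add: sorted_wrt_append)
  then show ?case using snoc.prems(2) by auto
qed

lemma Tbar_finite: "finite (Tbar_tuples r m)"
proof -
  have "Tbar_tuples r m \<subseteq> {xs. set xs \<subseteq> {..m} \<and> length xs = r}"
  proof
    fix ns assume "ns \<in> Tbar_tuples r m"
    then show "ns \<in> {xs. set xs \<subseteq> {..m} \<and> length xs = r}"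
      unfolding Tbar_tuples_def using sorted_le_last[of ns] by auto
  qed
  then show ?thesis by (rule finite_subset) (intro finite_lists_length_eq, simp)
qed

lemma Tbar_one: "Tbar_tuples 1 m = (if m > 0 then {[m]} else {})"
  unfolding Tbar_tuples_def by (auto simp: length_Suc_conv)

lemma Tbar_Suc:
  assumes "r \<ge> 1"
  shows "Tbar_tuples (Suc r) m = (\<lambda>ns. ns @ [m]) ` (\<Union>n\<in>{..<m}. Tbar_tuples r n)"
proof
  show "Tbar_tuples (Suc r) m \<subseteq> (\<lambda>ns. ns @ [m]) ` (\<Union>n\<in>{..<m}. Tbar_tuples r n)"
  proof
    fix ns assume ns: "ns \<in> Tbar_tuples (Suc r) m"
    then have len: "length ns = Suc r" and so: "sorted_wrt (<) ns" and pos: "\<forall>x\<in>set ns. 0 < x"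
      and la: "last ns = m" unfolding Tbar_tuples_def by auto
    have ne: "ns \<noteq> []" using len by auto
    define xs where "xs = butlast ns"
    have nsx: "ns = xs @ [m]" using ne la unfolding xs_def by (metis append_butlast_last_id)
    have lx: "length xs = r" using len unfolding xs_def by simp
    have xne: "xs \<noteq> []" using lx assms by auto
    have so2: "sorted_wrt (<) xs" and lt: "\<forall>x\<in>set xs. x < m" using so unfolding nsx by (auto simp: sorted_wrt_append)
    have "last xs < m" using lt xne by auto
    moreover have "xs \<in> Tbar_tuples r (last xs)"
      unfolding Tbar_tuples_def using lx so2 pos nsx by auto
    ultimately show "ns \<in> (\<lambda>ns. ns @ [m]) ` (\<Union>n\<in>{..<m}. Tbar_tuples r n)"
      using nsx by blast
  qed
next
  show "(\<lambda>ns. ns @ [m]) ` (\<Union>n\<in>{..<m}. Tbar_tuples r n) \<subseteq> Tbar_tuples (Suc r) m"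
  proof
    fix ys assume "ys \<in> (\<lambda>ns. ns @ [m]) ` (\<Union>n\<in>{..<m}. Tbar_tuples r n)"
    then obtain ns n where ys: "ys = ns @ [m]" and nm: "n < m" and ns: "ns \<in> Tbar_tuples r n" by auto
    then have len: "length ns = r" and so: "sorted_wrt (<) ns" and pos: "\<forall>x\<in>set ns. 0 < x"
      and la: "last ns = n" unfolding Tbar_tuples_def by auto
    have "\<forall>x\<in>set ns. x < m" using sorted_le_last[OF so] la nm by fastforce
    then show "ys \<in> Tbar_tuples (Suc r) m"
      unfolding Tbar_tuples_def ys using len so pos nm by (auto simp: sorted_wrt_append)
  qed
qed

definition g :: "nat \<Rightarrow> nat \<Rightarrow> real" where
  "g r m = (\<Sum>ns\<in>Tbar_tuples r m. 1 / (\<Prod>j<r. 2 * real (ns ! j) - real (j + 1)))"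

lemma Tbar_term_g: "Tbar_term r m = 2 ^ r * ((-1) ^ m * g r m)"
  unfolding Tbar_term_def g_def by (simp add: sum_distrib_left)

lemma g_b: "r \<ge> 1 \<Longrightarrow> g r m = b r m"
proof (induction r arbitrary: m rule: nat_induct_at_least)
  case base
  have "Tbar_tuples (Suc 0) m = (if m > 0 then {[m]} else {})" using Tbar_one by simp
  then show ?case by (simp add: g_def lessThan_Suc)
next
  case (Suc r)
  have fin: "finite (\<Union>n\<in>{..<m}. Tbar_tuples r n)" by (auto intro: Tbar_finite)
  have inj: "inj_on (\<lambda>ns. ns @ [m]) (\<Union>n\<in>{..<m}. Tbar_tuples r n)" by (auto intro: inj_onI)
  have prod: "(\<Prod>j<Suc r. 2 * real ((ns @ [m]) ! j) - real (j + 1))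
      = (\<Prod>j<r. 2 * real (ns ! j) - real (j + 1)) * (2 * real m - real (Suc r))"
    if "ns \<in> Tbar_tuples r n" for ns n
  proof -
    have l: "length ns = r" using that unfolding Tbar_tuples_def by auto
    have "(\<Prod>j<r. 2 * real ((ns @ [m]) ! j) - real (j + 1)) = (\<Prod>j<r. 2 * real (ns ! j) - real (j + 1))"
      by (rule prod.cong) (auto simp: nth_append l)
    then show ?thesis by (simp add: l nth_append)
  qed
  have "g (Suc r) m = (\<Sum>ns\<in>(\<Union>n\<in>{..<m}. Tbar_tuples r n).
           1 / (\<Prod>j<Suc r. 2 * real ((ns @ [m]) ! j) - real (j + 1)))"
    unfolding g_def Tbar_Suc[OF Suc.hyps] by (subst sum.reindex[OF inj]) simp
  also have "\<dots> = (\<Sum>n<m. \<Sum>ns\<in>Tbar_tuples r n.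
           1 / (\<Prod>j<Suc r. 2 * real ((ns @ [m]) ! j) - real (j + 1)))"
    by (rule sum.UNION_disjoint) (simp_all add: Tbar_finite, auto simp: Tbar_tuples_def)
  also have "\<dots> = (\<Sum>n<m. \<Sum>ns\<in>Tbar_tuples r n.
           1 / (\<Prod>j<r. 2 * real (ns ! j) - real (j + 1)) / (2 * real m - real (Suc r)))"
    by (rule sum.cong[OF refl], rule sum.cong[OF refl], subst prod, assumption, simp)
  also have "\<dots> = (\<Sum>n<m. g r n / (2 * real m - real (Suc r)))"
    unfolding g_def by (simp add: sum_divide_distrib)
  also have "\<dots> = b (Suc r) m" using Suc.IH by (simp add: sum_divide_distrib)
  finally show ?case .
qed



definition A :: "nat \<Rightarrow> nat \<Rightarrow> real \<Rightarrow> real" where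
  "A r N t = (\<Sum>m<N. (-1) ^ m * b r m * t ^ (2 * m - r))"
definition A' :: "nat \<Rightarrow> nat \<Rightarrow> real \<Rightarrow> real" where
  "A' r N t = (\<Sum>m<N. (-1) ^ m * b r m * (real (2 * m - r) * t ^ (2 * m - r - Suc 0)))"
definition F :: "nat \<Rightarrow> real \<Rightarrow> real" where
  "F r t = (-1) ^ r * arctan t ^ r / fact r"
definition C :: "nat \<Rightarrow> nat \<Rightarrow> real" where
  "C r N = (\<Sum>n<N. b r n)"

lemma C_nonneg: "C r N \<ge> 0"
  unfolding C_def by (intro sum_nonneg b_nonneg)

lemma deriv_A: "(A r N has_real_derivative A' r N t) (at t)"
proof (induction N)
  case 0 then show ?case by (simp add: A_def A'_def)
next
  case (Suc N)
  have "((\<lambda>t. A r N t + (-1) ^ N * b r N * t ^ (2 * N - r)) has_real_derivative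
      A' r N t + (-1) ^ N * b r N * (real (2 * N - r) * t ^ (2 * N - r - Suc 0))) (at t)"
    by (intro DERIV_add Suc DERIV_cmult DERIV_pow)
  then show ?case by (simp add: A_def A'_def)
qed

lemma deriv_F: "(F (Suc r) has_real_derivative - F r t / (1 + t\<^sup>2)) (at t)"
proof -
  have "((\<lambda>t. (-1) ^ Suc r / fact (Suc r) * arctan t ^ Suc r) has_real_derivative
     (-1) ^ Suc r / fact (Suc r) * (real (Suc r) * (inverse (1 + t\<^sup>2) * arctan t ^ r))) (at t)"
    using DERIV_cmult[OF DERIV_power_Suc[OF DERIV_arctan[of t], where n=r], of "(-1) ^ Suc r / fact (Suc r)"]
    by (simp add: add.commute)
  moreover have "(-1) ^ Suc r / fact (Suc r) * (real (Suc r) * (inverse (1 + t\<^sup>2) * arctan t ^ r))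
     = - F r t / (1 + t\<^sup>2)"
  proof -
    have "(-1) ^ Suc r / fact (Suc r) * (real (Suc r) * (inverse (1 + t\<^sup>2) * arctan t ^ r))
        = - ((-1) ^ r * arctan t ^ r / fact r) * inverse (1 + t\<^sup>2) * (real (Suc r) / real (Suc r))"
      by (simp add: fact_Suc del: of_nat_Suc)
    then show ?thesis unfolding F_def by (simp add: divide_inverse)
  qed
  moreover have "(\<lambda>t. (-1) ^ Suc r / fact (Suc r) * arctan t ^ Suc r) = F (Suc r)"
    unfolding F_def by auto
  ultimately show ?thesis by simp
qed

lemma A_zero: "r \<ge> 1 \<Longrightarrow> A r N 0 = 0"
  unfolding A_def
proof (intro sum.neutral ballI)
  fix m assume "r \<ge> 1" "m \<in> {..<N}"
  show "(-1) ^ m * b r m * 0 ^ (2 * m - r) = (0::real)"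
  proof (cases "m < r")
    case True then show ?thesis by (simp add: b_zero)
  next
    case False then have "2 * m - r \<noteq> 0" using \<open>r \<ge> 1\<close> by simp
    then show ?thesis by simp
  qed
qed

lemma F_zero: "F (Suc r) 0 = 0"
  unfolding F_def by simp

lemma A0: "N \<ge> 1 \<Longrightarrow> A 0 N t = 1"
proof (induction N rule: nat_induct_at_least)
  case base then show ?case by (simp add: A_def)
next
  case (Suc N) then show ?case by (simp add: A_def)
qed

lemma F0: "F 0 t = 1" by (simp add: F_def)

lemma identity:
  "(1 + t\<^sup>2) * A' (Suc r) (Suc N) t = - A r N t + (-1) ^ N * t ^ (2 * N - r) * C r N"
proof (induction N)
  case 0 then show ?case by (simp add: A_def A'_def C_def)
next
  case (Suc N)
  show ?case
  proof (cases "N < r")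
    case True
    have z1: "b r N = 0" using True by (simp add: b_zero)
    have z2: "C r N = 0" unfolding C_def using True by (auto intro!: sum.neutral simp: b_zero)
    have z3: "C r (Suc N) = 0" using z1 z2 by (simp add: C_def)
    have z4: "b (Suc r) (Suc N) = 0" using z3 unfolding C_def by (simp only: b.simps)
    have "A' (Suc r) (Suc (Suc N)) t = A' (Suc r) (Suc N) t"
      unfolding A'_def sum.lessThan_Suc[of _ "Suc N"] z4 by simp
    moreover have "A r (Suc N) t = A r N t" using z1 by (simp add: A_def)
    ultimately show ?thesis using Suc z2 z3 by simp
  next
    case False
    define k where "k = 2 * N - r"
    have e1: "2 * Suc N - Suc r = Suc k" using False unfolding k_def by simp
    have e2: "2 * Suc N - r = k + 2" using False unfolding k_def by simp
    have e3: "2 * N - r = k" unfolding k_def by simp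
    have den: "2 * real (Suc N) - real (Suc r) = real (Suc k)" using False unfolding k_def by simp
    have bb: "b (Suc r) (Suc N) * real (Suc k) = C r (Suc N)"
      using den by (simp add: C_def del: of_nat_Suc)
    have CS: "C r (Suc N) = C r N + b r N" by (simp add: C_def)
    have "(1 + t\<^sup>2) * A' (Suc r) (Suc (Suc N)) t
        = (1 + t\<^sup>2) * A' (Suc r) (Suc N) t
          + (1 + t\<^sup>2) * ((-1) ^ Suc N * (b (Suc r) (Suc N) * real (Suc k)) * t ^ k)"
      unfolding A'_def sum.lessThan_Suc[of _ "Suc N"] e1 by (simp add: algebra_simps del: of_nat_Suc b.simps)
    also have "\<dots> = - A r N t + (-1) ^ N * t ^ k * C r N
          + (1 + t\<^sup>2) * ((-1) ^ Suc N * C r (Suc N) * t ^ k)"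
      using Suc e3 bb by simp
    also have "\<dots> = - A r (Suc N) t + (-1) ^ Suc N * t ^ (2 * Suc N - r) * C r (Suc N)"
      unfolding A_def sum.lessThan_Suc e2 e3 CS by (simp add: power2_eq_square algebra_simps del: b.simps)
    finally show ?thesis .
  qed
qed

lemma sqrt_sum: "(\<Sum>n<Suc M. if n = 0 then 0 else 1 / sqrt (real n)) \<le> 2 * sqrt (real M)"
proof (induction M)
  case 0 then show ?case by simp
next
  case (Suc M)
  define s where "s = sqrt (real M)"
  define u where "u = sqrt (real (Suc M))"
  have s0: "s \<ge> 0" and u0: "u > 0" unfolding s_def u_def by auto
  have uu: "u\<^sup>2 = s\<^sup>2 + 1" unfolding s_def u_def by simp
  have "(2 * s * u)\<^sup>2 = 4 * s\<^sup>2 * (s\<^sup>2 + 1)" by (simp add: power_mult_distrib uu)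
  also have "\<dots> \<le> (2 * s\<^sup>2 + 1)\<^sup>2" by (simp add: power2_eq_square algebra_simps)
  finally have "(2 * s * u)\<^sup>2 \<le> (2 * s\<^sup>2 + 1)\<^sup>2" .
  then have "2 * s * u \<le> 2 * s\<^sup>2 + 1"
    by (rule power2_le_imp_le) (use s0 in simp)
  then have "2 * s * u + 1 \<le> 2 * u\<^sup>2" using uu by simp
  then have "(2 * s * u + 1) / u \<le> 2 * u\<^sup>2 / u" using u0 by (intro divide_right_mono) auto
  then have key: "2 * s + 1 / u \<le> 2 * u" using u0 by (simp add: field_simps power2_eq_square)
  have "(\<Sum>n<Suc (Suc M). if n = 0 then 0 else 1 / sqrt (real n))
      = (\<Sum>n<Suc M. if n = 0 then 0 else 1 / sqrt (real n)) + 1 / u"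
    by (simp add: u_def)
  also have "\<dots> \<le> 2 * s + 1 / u" using Suc by (simp add: s_def)
  also have "\<dots> \<le> 2 * u" by (rule key)
  finally show ?case by (simp add: u_def)
qed

lemma sqrt_sum': "(\<Sum>n<N. if n = 0 then 0 else 1 / sqrt (real n)) \<le> 2 * sqrt (real N)"
proof (cases N)
  case 0 then show ?thesis by simp
next
  case (Suc M)
  have "(\<Sum>n<N. if n = 0 then 0 else 1 / sqrt (real n)) \<le> 2 * sqrt (real M)"
    using sqrt_sum Suc by simp
  also have "\<dots> \<le> 2 * sqrt (real N)" using Suc by simp
  finally show ?thesis .
qed

lemma C_growth: "\<exists>K\<ge>0. \<forall>N. C r N \<le> K * sqrt (real N)"
proof (induction r)
  case 0
  have "C 0 N \<le> 1 * sqrt (real N)" for N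
  proof (cases N)
    case 0 then show ?thesis by (simp add: C_def)
  next
    case (Suc M)
    have "C 0 N = 1" unfolding C_def Suc by (induction M) auto
    then show ?thesis using Suc by simp
  qed
  then show ?case by (intro exI[of _ 1]) auto
next
  case (Suc r)
  then obtain K where K0: "K \<ge> 0" and K: "\<And>N. C r N \<le> K * sqrt (real N)" by auto
  have tm: "b (Suc r) n \<le> K * (if n = 0 then 0 else 1 / sqrt (real n))" for n
  proof (cases "n < Suc r")
    case True then show ?thesis using K0 by (simp only: b_zero[OF True]) simp
  next
    case False
    then have n1: "n \<ge> 1" by simp
    have den: "2 * real n - real (Suc r) \<ge> real n" using False by simp
    have np: "real n > 0" using n1 by simp
    have "b (Suc r) n = C r n / (2 * real n - real (Suc r))" by (simp add: C_def)
    also have "\<dots> \<le> C r n / real n"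
      using den np C_nonneg by (intro divide_left_mono) auto
    also have "\<dots> \<le> K * sqrt (real n) / real n" using K np by (intro divide_right_mono) auto
    also have "\<dots> = K * (1 / sqrt (real n))"
      using np by (simp add: field_simps real_sqrt_mult[symmetric])
    finally show ?thesis using n1 by simp
  qed
  have "C (Suc r) N \<le> (2 * K) * sqrt (real N)" for N
  proof -
    have "C (Suc r) N \<le> (\<Sum>n<N. K * (if n = 0 then 0 else 1 / sqrt (real n)))"
      unfolding C_def by (intro sum_mono tm)
    also have "\<dots> = K * (\<Sum>n<N. if n = 0 then 0 else 1 / sqrt (real n))"
      by (simp add: sum_distrib_left)
    also have "\<dots> \<le> K * (2 * sqrt (real N))" using K0 sqrt_sum' by (intro mult_left_mono) auto
    finally show ?thesis by simp
  qed
  then show ?case using K0 by (intro exI[of _ "2 * K"]) auto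
qed

lemma step_bound:
  assumes Nr: "N \<ge> r" and e0: "e \<ge> 0" and IH: "\<forall>s\<in>{0..1}. \<bar>A r N s - F r s\<bar> \<le> e"
    and t: "t \<in> {0..1}"
  shows "\<bar>A (Suc r) (Suc N) t - F (Suc r) t\<bar> \<le> e + C r N / (real (2 * N - r) + 1)"
proof -
  define k where "k = 2 * N - r"
  define c where "c = C r N"
  have c0: "c \<ge> 0" unfolding c_def by (rule C_nonneg)
  define D where "D s = A (Suc r) (Suc N) s - F (Suc r) s" for s
  define DD where "DD s = A' (Suc r) (Suc N) s + F r s / (1 + s\<^sup>2)" for s
  define g where "g s = e * s + c * s ^ Suc k / real (Suc k)" for s
  have dD: "(D has_real_derivative DD s) (at s)" for s
  proof -
    have "(D has_real_derivative A' (Suc r) (Suc N) s - (- F r s / (1 + s\<^sup>2))) (at s)"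
      unfolding D_def by (intro DERIV_diff deriv_A deriv_F)
    then show ?thesis by (simp add: DD_def)
  qed
  have dg: "(g has_real_derivative e + c * s ^ k) (at s)" for s
  proof -
    have "(g has_real_derivative e * 1 + c / real (Suc k) * (real (Suc k) * s ^ (Suc k - Suc 0))) (at s)"
    proof -
      have "((\<lambda>s. e * s + c / real (Suc k) * s ^ Suc k) has_real_derivative
          e * 1 + c / real (Suc k) * (real (Suc k) * s ^ (Suc k - Suc 0))) (at s)"
        by (intro DERIV_add DERIV_cmult DERIV_ident DERIV_pow)
      moreover have "(\<lambda>s. e * s + c / real (Suc k) * s ^ Suc k) = g"
        unfolding g_def by auto
      ultimately show ?thesis by simp
    qed
    then show ?thesis by (simp del: of_nat_Suc)
  qed
  have DDb: "\<bar>DD s\<bar> \<le> e + c * s ^ k" if s: "s \<in> {0..1}" for s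
  proof -
    have p: "1 + s\<^sup>2 > 0" by (simp add: add_pos_nonneg)
    have "(1 + s\<^sup>2) * A' (Suc r) (Suc N) s = - A r N s + (-1) ^ N * s ^ k * c"
      using identity unfolding k_def c_def by simp
    then have "A' (Suc r) (Suc N) s = (- A r N s + (-1) ^ N * s ^ k * c) / (1 + s\<^sup>2)"
      using p by (simp add: field_simps)
    then have "DD s = (- (A r N s - F r s) + (-1) ^ N * s ^ k * c) / (1 + s\<^sup>2)"
      unfolding DD_def by (simp add: add_divide_distrib diff_divide_distrib)
    then have "\<bar>DD s\<bar> = \<bar>- (A r N s - F r s) + (-1) ^ N * s ^ k * c\<bar> / (1 + s\<^sup>2)"
      using p by simp
    also have "\<dots> \<le> \<bar>- (A r N s - F r s) + (-1) ^ N * s ^ k * c\<bar>"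
    proof -
      have "\<bar>- (A r N s - F r s) + (-1) ^ N * s ^ k * c\<bar> * 1
          \<le> \<bar>- (A r N s - F r s) + (-1) ^ N * s ^ k * c\<bar> * (1 + s\<^sup>2)"
        by (intro mult_left_mono) auto
      then show ?thesis using p by (simp add: divide_le_eq)
    qed
    also have "\<dots> \<le> \<bar>A r N s - F r s\<bar> + \<bar>(-1) ^ N * s ^ k * c\<bar>"
      by (rule order_trans[OF abs_triangle_ineq]) simp
    also have "\<bar>(-1) ^ N * s ^ k * c\<bar> = s ^ k * c"
      using s c0 by (simp add: abs_mult power_abs)
    also have "\<bar>A r N s - F r s\<bar> \<le> e" using IH s by auto
    finally show ?thesis by (simp add: mult.commute)
  qed
  have D0: "D 0 = 0" unfolding D_def using A_zero[of "Suc r"] F_zero by simp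
  have g0: "g 0 = 0" unfolding g_def by simp
  have t0: "0 \<le> t" and t1: "t \<le> 1" using t by auto
  have "(\<lambda>s. g s - D s) 0 \<le> (\<lambda>s. g s - D s) t"
  proof (rule DERIV_nonneg_imp_nondecreasing[OF t0])
    fix x assume "0 \<le> x" "x \<le> t"
    then have x: "x \<in> {0..1}" using t1 by auto
    show "\<exists>y. ((\<lambda>s. g s - D s) has_real_derivative y) (at x) \<and> 0 \<le> y"
      using DERIV_diff[OF dg dD] DDb[OF x] by (intro exI conjI) (auto simp: abs_le_iff)
  qed
  then have u1: "D t \<le> g t" using D0 g0 by simp
  have "(\<lambda>s. g s + D s) 0 \<le> (\<lambda>s. g s + D s) t"
  proof (rule DERIV_nonneg_imp_nondecreasing[OF t0])
    fix x assume "0 \<le> x" "x \<le> t"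
    then have x: "x \<in> {0..1}" using t1 by auto
    show "\<exists>y. ((\<lambda>s. g s + D s) has_real_derivative y) (at x) \<and> 0 \<le> y"
      using DERIV_add[OF dg dD] DDb[OF x] by (intro exI conjI) (auto simp: abs_le_iff)
  qed
  then have u2: "- D t \<le> g t" using D0 g0 by simp
  have "g t \<le> e * 1 + c * 1 / real (Suc k)"
    unfolding g_def using t0 t1 e0 c0
    by (intro add_mono mult_left_mono divide_right_mono mult_left_mono power_le_one) auto
  then have "g t \<le> e + c / (real k + 1)" by (simp add: add.commute)
  with u1 u2 show ?thesis unfolding D_def k_def c_def by (simp add: abs_le_iff)
qed

lemma growth_small:
  assumes "\<epsilon> > 0"
  shows "eventually (\<lambda>N. N \<ge> r \<and> C r N / (real (2 * N - r) + 1) \<le> \<epsilon>) sequentially"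
proof -
  obtain K where K0: "K \<ge> 0" and K: "\<And>N. C r N \<le> K * sqrt (real N)" using C_growth by blast
  define N0 where "N0 = r + 1 + nat \<lceil>(K / \<epsilon>)\<^sup>2\<rceil>"
  have "N \<ge> r \<and> C r N / (real (2 * N - r) + 1) \<le> \<epsilon>" if N: "N \<ge> N0" for N
  proof
    show Nr: "N \<ge> r" using N unfolding N0_def by simp
    have np: "real N > 0" using N unfolding N0_def by simp
    have "real N \<ge> (K / \<epsilon>)\<^sup>2" using N unfolding N0_def by linarith
    then have "sqrt (real N) \<ge> sqrt ((K / \<epsilon>)\<^sup>2)" by (rule real_sqrt_le_mono)
    then have sq: "sqrt (real N) \<ge> K / \<epsilon>" using K0 assms by simp
    have sp: "sqrt (real N) > 0" using np by simp
    have den: "real (2 * N - r) + 1 \<ge> real N" using Nr by simp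
    have "C r N / (real (2 * N - r) + 1) \<le> C r N / real N"
      using den np C_nonneg by (intro divide_left_mono) auto
    also have "\<dots> \<le> K * sqrt (real N) / real N" using K np by (intro divide_right_mono) auto
    also have "\<dots> = K / sqrt (real N)"
      using np by (simp add: field_simps real_sqrt_mult[symmetric])
    also have "\<dots> \<le> \<epsilon>" using sq sp assms by (simp add: divide_le_eq field_simps)
    finally show "C r N / (real (2 * N - r) + 1) \<le> \<epsilon>" .
  qed
  then show ?thesis unfolding eventually_sequentially by blast
qed

lemma unif: "\<forall>\<epsilon>>0. eventually (\<lambda>N. \<forall>t\<in>{0..1}. \<bar>A r N t - F r t\<bar> \<le> \<epsilon>) sequentially"
proof (induction r)
  case 0
  show ?case
  proof (intro allI impI)
    fix \<epsilon> :: real assume "\<epsilon> > 0"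
    then have "\<forall>N\<ge>1. \<forall>t\<in>{0..1}. \<bar>A 0 N t - F 0 t\<bar> \<le> \<epsilon>" by (simp add: A0 F0)
    then show "eventually (\<lambda>N. \<forall>t\<in>{0..1}. \<bar>A 0 N t - F 0 t\<bar> \<le> \<epsilon>) sequentially"
      unfolding eventually_sequentially by blast
  qed
next
  case (Suc r)
  show ?case
  proof (intro allI impI)
    fix \<epsilon> :: real assume e: "\<epsilon> > 0"
    have ev1: "eventually (\<lambda>N. \<forall>t\<in>{0..1}. \<bar>A r N t - F r t\<bar> \<le> \<epsilon> / 2) sequentially"
      using Suc e half_gt_zero by blast
    have ev2: "eventually (\<lambda>N. N \<ge> r \<and> C r N / (real (2 * N - r) + 1) \<le> \<epsilon> / 2) sequentially"
      using growth_small[of "\<epsilon> / 2" r] e by linarith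
    have "eventually (\<lambda>N. \<forall>t\<in>{0..1}. \<bar>A (Suc r) (Suc N) t - F (Suc r) t\<bar> \<le> \<epsilon>) sequentially"
      using ev1 ev2
    proof eventually_elim
      case (elim N)
      show ?case
      proof
        fix t :: real assume t: "t \<in> {0..1}"
        have "\<bar>A (Suc r) (Suc N) t - F (Suc r) t\<bar> \<le> \<epsilon> / 2 + C r N / (real (2 * N - r) + 1)"
          using elim e t by (intro step_bound) auto
        moreover have "C r N / (real (2 * N - r) + 1) \<le> \<epsilon> / 2" using elim(2) by blast
        ultimately show "\<bar>A (Suc r) (Suc N) t - F (Suc r) t\<bar> \<le> \<epsilon>" by linarith
      qed
    qed
    then show "eventually (\<lambda>N. \<forall>t\<in>{0..1}. \<bar>A (Suc r) N t - F (Suc r) t\<bar> \<le> \<epsilon>) sequentially"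
      using eventually_sequentially_Suc[of "\<lambda>N. \<forall>t\<in>{0..1}. \<bar>A (Suc r) N t - F (Suc r) t\<bar> \<le> \<epsilon>"] by blast
  qed
qed

lemma series: "(\<lambda>m. (-1) ^ m * b r m) sums F r 1"
  unfolding sums_def
proof (rule tendsto_iff[THEN iffD2], intro allI impI)
  fix \<epsilon> :: real assume e: "\<epsilon> > 0"
  have "eventually (\<lambda>N. \<forall>t\<in>{0..1}. \<bar>A r N t - F r t\<bar> \<le> \<epsilon> / 2) sequentially"
    using unif e half_gt_zero by blast
  then show "eventually (\<lambda>N. dist (\<Sum>m<N. (-1) ^ m * b r m) (F r 1) < \<epsilon>) sequentially"
  proof eventually_elim
    case (elim N)
    then have "\<bar>A r N 1 - F r 1\<bar> \<le> \<epsilon> / 2" by auto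
    then show ?case using e by (simp add: A_def dist_real_def)
  qed
qed


theorem mainTheorem7:
  fixes r :: nat
  assumes "r \<ge> 1"
  shows "Tbar_term r sums ((-1) ^ r / fact r * (pi / 2) ^ r)"
proof -
  have eq: "Tbar_term r = (\<lambda>m. 2 ^ r * ((-1) ^ m * b r m))"
    using g_b[OF assms] by (auto simp: Tbar_term_g)
  have "(\<lambda>m. 2 ^ r * ((-1) ^ m * b r m)) sums (2 ^ r * F r 1)"
    by (intro sums_mult series)
  moreover have "2 ^ r * F r 1 = (-1) ^ r / fact r * (pi / 2) ^ r"
  proof -
    have "(2::real) ^ r * (pi / 4) ^ r = (pi / 2) ^ r"
      by (simp add: power_mult_distrib[symmetric])
    then show ?thesis unfolding F_def arctan_one by (simp add: field_simps)
  qed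
  ultimately show ?thesis using eq by simp
qed

end
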